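(* Let $G$ be a connected graph with $|V(G)|\ge 3$ and $L(G)=2l(G)$, and let $F_L,F_l$ be maximum matchings of $G$ with $\nu(G\setminus F_L)=L(G)$ and $\nu(G\setminus F_l)=l(G)$. Then for any maximum matching $H_L$ of $G\setminus F_L$, no edge of $F_L\cap F_l$ is adjacent to two edges of $H_L$.
   Context: Graphs are finite, undirected, without loops or multiple edges. $\nu(G)$ denotes the maximum size of a matching of $G$; a matching is maximum if it has $\nu(G)$ edges. For $F\subseteq E(G)$, $G\setminus F$ is the graph with vertex set $V(G)$ and edge set $E(G)\setminus F$. Two distinct edges are adjacent if they share an endpoint. Define $L(G)=\max\{\nu(G\setminus F): F \text{ a maximum matching of } G\}$ and $l(G)=\min\{\nu(G\setminus F): F \text{ a maximum matching of } G\}$. *)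

theory Defs
  imports Main
begin

definition simple_graph :: "'a set \<Rightarrow> 'a set set \<Rightarrow> bool" where
  "simple_graph V E \<longleftrightarrow> finite V \<and>
     (\<forall>e\<in>E. \<exists>u v. e = {u, v} \<and> u \<noteq> v \<and> u \<in> V \<and> v \<in> V)"

definition connected_graph :: "'a set \<Rightarrow> 'a set set \<Rightarrow> bool" where
  "connected_graph V E \<longleftrightarrow>
     (\<forall>u\<in>V. \<forall>v\<in>V. (u, v) \<in> {(x, y). {x, y} \<in> E}\<^sup>*)"

definition matching_of :: "'a set set \<Rightarrow> 'a set set \<Rightarrow> bool" where
  "matching_of E M \<longleftrightarrow> M \<subseteq> E \<and> (\<forall>e\<in>M. \<forall>f\<in>M. e \<noteq> f \<longrightarrow> e \<inter> f = {})"

definition nu :: "'a set set \<Rightarrow> nat" where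
  "nu E = Max {card M | M. matching_of E M}"

definition max_matching :: "'a set set \<Rightarrow> 'a set set \<Rightarrow> bool" where
  "max_matching E M \<longleftrightarrow> matching_of E M \<and> card M = nu E"

definition L_nu :: "'a set set \<Rightarrow> nat" where
  "L_nu E = Max {nu (E - F) | F. max_matching E F}"

definition l_nu :: "'a set set \<Rightarrow> nat" where
  "l_nu E = Min {nu (E - F) | F. max_matching E F}"

definition adjacent_edges :: "'a set \<Rightarrow> 'a set \<Rightarrow> bool" where
  "adjacent_edges e f \<longleftrightarrow> e \<noteq> f \<and> e \<inter> f \<noteq> {}"

end

theory Submission
  imports Defs
begin

lemma nu_ge:
  assumes "finite E" "matching_of E M"
  shows "card M \<le> nu E"
proof -
  have "{card M |M. matching_of E M} \<subseteq> card ` Pow E"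
  proof
    fix x assume "x \<in> {card M |M. matching_of E M}"
    then obtain M' where "x = card M'" "matching_of E M'" by blast
    hence "M' \<in> Pow E" "x = card M'" unfolding matching_of_def by auto
    thus "x \<in> card ` Pow E" by blast
  qed
  hence "finite {card M |M. matching_of E M}"
    by (rule finite_subset) (simp add: assms(1))
  thus ?thesis unfolding nu_def using assms(2) by (intro Max_ge) auto
qed

lemma edge_shape:
  assumes "simple_graph V E" "h \<in> E" "e \<in> E" "h \<noteq> e" "h \<inter> e \<noteq> {}"
  shows "\<exists>w. w \<in> h \<and> w \<notin> e \<and> h \<subseteq> insert w e"
proof -
  obtain a b where h: "h = {a,b}" "a \<noteq> b" using assms(1,2) unfolding simple_graph_def by blast
  obtain u v where e: "e = {u,v}" "u \<noteq> v" using assms(1,3) unfolding simple_graph_def by blast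
  have "\<not> h \<subseteq> e"
  proof
    assume hs: "h \<subseteq> e"
    have "card h = 2" "card e = 2" using h e by auto
    hence "h = e" using hs e by (intro card_subset_eq) auto
    thus False using assms(4) by simp
  qed
  then obtain w where w: "w \<in> h" "w \<notin> e" by blast
  have "h \<subseteq> insert w e"
  proof
    fix x assume x: "x \<in> h"
    show "x \<in> insert w e"
    proof (cases "x = w")
      case False
      have "x = a \<or> x = b" "w = a \<or> w = b" using x w h by auto
      hence "h = {x, w}" using False h by auto
      hence "x \<in> e" using assms(5) w(2) by auto
      thus ?thesis by simp
    qed simp
  qed
  thus ?thesis using w by blast
qed

lemma cover:
  assumes fin: "finite E" and mFL: "matching_of E FL" and mFl: "matching_of E Fl"
    and HL: "HL \<subseteq> E - FL" and e: "e \<in> FL \<inter> Fl" and h: "h \<in> HL" "h \<notin> Fl"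
    and w: "w \<notin> e" "h \<subseteq> insert w e"
    and cardle: "nu (E - Fl) \<le> card (FL - Fl)"
  shows "\<exists>f\<in>FL - Fl. w \<in> f"
proof (rule ccontr)
  assume nw: "\<not> (\<exists>f\<in>FL - Fl. w \<in> f)"
  let ?M = "insert h (FL - Fl)"
  have hE: "h \<in> E - Fl" using h HL by auto
  have hnot: "h \<notin> FL - Fl" using h HL by auto
  have disj: "\<forall>f\<in>FL - Fl. f \<inter> h = {}"
  proof
    fix f assume f: "f \<in> FL - Fl"
    have "f \<noteq> e" using f e by auto
    hence "f \<inter> e = {}" using mFL f e unfolding matching_of_def by blast
    thus "f \<inter> h = {}" using nw f w by blast
  qed
  have pFL: "\<forall>x\<in>FL. \<forall>y\<in>FL. x \<noteq> y \<longrightarrow> x \<inter> y = {}" using mFL unfolding matching_of_def by blast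
  have "?M \<subseteq> E - Fl" using mFL hE unfolding matching_of_def by blast
  moreover have "\<forall>x\<in>?M. \<forall>y\<in>?M. x \<noteq> y \<longrightarrow> x \<inter> y = {}"
    using pFL disj by blast
  ultimately have "matching_of (E - Fl) ?M" unfolding matching_of_def by blast
  moreover have "finite (E - Fl)" using fin by auto
  ultimately have "card ?M \<le> nu (E - Fl)" using nu_ge by blast
  moreover have "finite (FL - Fl)" using mFL fin unfolding matching_of_def
    by (meson finite_Diff finite_subset)
  ultimately have "card (FL - Fl) + 1 \<le> nu (E - Fl)" using hnot by simp
  thus False using cardle by simp
qed

theorem claim4:
  fixes V :: "'a set" and E FL Fl HL :: "'a set set"
  assumes "simple_graph V E"
    and "connected_graph V E"
    and "card V \<ge> 3"
    and "L_nu E = 2 * l_nu E"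
    and "max_matching E FL" and "nu (E - FL) = L_nu E"
    and "max_matching E Fl" and "nu (E - Fl) = l_nu E"
    and "max_matching (E - FL) HL"
  shows "\<forall>e\<in>FL \<inter> Fl. \<not> (\<exists>h1\<in>HL. \<exists>h2\<in>HL. h1 \<noteq> h2 \<and>
           adjacent_edges e h1 \<and> adjacent_edges e h2)"
proof (intro ballI notI)
  fix e assume e: "e \<in> FL \<inter> Fl"
  assume "\<exists>h1\<in>HL. \<exists>h2\<in>HL. h1 \<noteq> h2 \<and> adjacent_edges e h1 \<and> adjacent_edges e h2"
  then obtain h1 h2 where hh: "h1 \<in> HL" "h2 \<in> HL" "h1 \<noteq> h2" "adjacent_edges e h1" "adjacent_edges e h2"
    by blast
  have EP: "E \<subseteq> Pow V"
  proof
    fix x assume "x \<in> E"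
    then obtain u v where "x = {u,v}" "u \<in> V" "v \<in> V"
      using assms(1) unfolding simple_graph_def by blast
    thus "x \<in> Pow V" by auto
  qed
  have finV: "finite V" using assms(1) unfolding simple_graph_def by simp
  have finE: "finite E" by (rule finite_subset[OF EP]) (simp add: finV)
  have mFL: "matching_of E FL" and cFL: "card FL = nu E" using assms(5) unfolding max_matching_def by auto
  have mFl: "matching_of E Fl" and cFl: "card Fl = nu E" using assms(7) unfolding max_matching_def by auto
  have mHL: "matching_of (E - FL) HL" and cHL: "card HL = nu (E - FL)" using assms(9) unfolding max_matching_def by auto
  have HLsub: "HL \<subseteq> E - FL" using mHL unfolding matching_of_def by blast
  have finFL: "finite FL" using mFL finE unfolding matching_of_def by (meson finite_subset)
  have finFl: "finite Fl" using mFl finE unfolding matching_of_def by (meson finite_subset)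
  have finHL: "finite HL" using HLsub finE by (meson finite_Diff finite_subset)
  define l where "l = l_nu E"
  have cHL2: "card HL = 2 * l" using cHL assms(4,6) l_def by simp
  have "matching_of (E - Fl) (HL - Fl)" using mHL unfolding matching_of_def by blast
  hence c1: "card (HL - Fl) \<le> l" using nu_ge[of "E - Fl" "HL - Fl"] finE assms(8) l_def by simp
  have "HL \<inter> Fl \<subseteq> Fl - FL" using HLsub by auto
  hence c2: "card (HL \<inter> Fl) \<le> card (Fl - FL)" using finFl by (meson card_mono finite_Diff)
  have c3: "card (Fl - FL) = card (FL - Fl)"
  proof -
    have "card (Fl - FL) = card Fl - card (Fl \<inter> FL)" using finFl by (simp add: card_Diff_subset_Int)
    moreover have "card (FL - Fl) = card FL - card (FL \<inter> Fl)" using finFL by (simp add: card_Diff_subset_Int)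
    ultimately show ?thesis using cFL cFl by (simp add: Int_commute)
  qed
  have c4: "card HL = card (HL - Fl) + card (HL \<inter> Fl)"
  proof -
    have "HL = (HL - Fl) \<union> (HL \<inter> Fl)" by blast
    hence "card HL = card ((HL - Fl) \<union> (HL \<inter> Fl))" by simp
    also have "\<dots> = card (HL - Fl) + card (HL \<inter> Fl)"
      using finHL by (intro card_Un_disjoint) auto
    finally show ?thesis .
  qed
  have cardle: "nu (E - Fl) \<le> card (FL - Fl)" using c1 c2 c3 c4 cHL2 assms(8) l_def by linarith
  have "matching_of (E - Fl) (FL - Fl)" using mFL unfolding matching_of_def by blast
  hence c5: "card (FL - Fl) \<le> l" using nu_ge[of "E - Fl" "FL - Fl"] finE assms(8) l_def by simp
  have ceq: "card (HL \<inter> Fl) = card (Fl - FL)" using c1 c2 c3 c4 c5 cHL2 by linarith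
  have eqs: "HL \<inter> Fl = Fl - FL"
    using finFl \<open>HL \<inter> Fl \<subseteq> Fl - FL\<close> ceq
    by (intro card_subset_eq) auto
  have eE: "e \<in> E" using e mFL unfolding matching_of_def by blast
  have key: "\<exists>w. w \<in> h \<and> w \<notin> e \<and> h \<subseteq> insert w e \<and> h \<notin> Fl \<and> (\<forall>g\<in>Fl - {e}. g \<inter> h = {})"
    if h: "h \<in> HL" "adjacent_edges e h" for h
  proof -
    have hE: "h \<in> E" using h HLsub by auto
    have hne: "h \<noteq> e" "h \<inter> e \<noteq> {}" using h(2) unfolding adjacent_edges_def by auto
    obtain w where w: "w \<in> h" "w \<notin> e" "h \<subseteq> insert w e"
      using edge_shape[OF assms(1) hE eE hne] by blast
    have hFl: "h \<notin> Fl"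
    proof
      assume "h \<in> Fl"
      hence "h \<inter> e = {}" using mFl e hne(1) unfolding matching_of_def by blast
      thus False using hne(2) by blast
    qed
    obtain f where f: "f \<in> FL - Fl" "w \<in> f"
      using cover[OF finE mFL mFl HLsub e h(1) hFl w(2,3) cardle] by blast
    have "\<forall>g\<in>Fl - {e}. g \<inter> h = {}"
    proof
      fix g assume g: "g \<in> Fl - {e}"
      have ge: "g \<inter> e = {}" using g mFl e unfolding matching_of_def by blast
      have "w \<notin> g"
      proof
        assume wg: "w \<in> g"
        show False
        proof (cases "g \<in> FL")
          case True
          hence "g = f" using mFL f wg unfolding matching_of_def by blast
          thus False using g f by auto
        next
          case False
          hence "g \<in> HL" using g eqs by blast
          hence "g = h" using mHL h(1) wg w(1) unfolding matching_of_def by blast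
          thus False using g hFl by auto
        qed
      qed
      thus "g \<inter> h = {}" using ge w(3) by blast
    qed
    thus ?thesis using w hFl by blast
  qed
  obtain w1 where k1: "h1 \<notin> Fl" "\<forall>g\<in>Fl - {e}. g \<inter> h1 = {}" using key[OF hh(1) hh(4)] by blast
  obtain w2 where k2: "h2 \<notin> Fl" "\<forall>g\<in>Fl - {e}. g \<inter> h2 = {}" using key[OF hh(2) hh(5)] by blast
  have d12: "h1 \<inter> h2 = {}" using mHL hh(1-3) unfolding matching_of_def by blast
  let ?M = "insert h1 (insert h2 (Fl - {e}))"
  have sub: "?M \<subseteq> E" using mFl hh(1,2) HLsub unfolding matching_of_def by blast
  have pw: "\<forall>x\<in>?M. \<forall>y\<in>?M. x \<noteq> y \<longrightarrow> x \<inter> y = {}"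
  proof (intro ballI impI)
    fix x y assume x: "x \<in> ?M" and y: "y \<in> ?M" and xy: "x \<noteq> y"
    have pFl: "\<forall>x\<in>Fl. \<forall>y\<in>Fl. x \<noteq> y \<longrightarrow> x \<inter> y = {}" using mFl unfolding matching_of_def by blast
    show "x \<inter> y = {}"
    proof (cases "x = h1")
      case True
      then show ?thesis using y xy k1(2) d12 by blast
    next
      case False
      note F1 = False
      show ?thesis
      proof (cases "x = h2")
        case True
        then show ?thesis using y xy k2(2) d12 F1 by blast
      next
        case False
        hence "x \<in> Fl - {e}" using x F1 by auto
        note xF = this
        consider "y = h1" | "y = h2" | "y \<in> Fl - {e}" using y by blast
        then show ?thesis
        proof cases
          case 1 then show ?thesis using xF k1(2) by simp
        next
          case 2 then show ?thesis using xF k2(2) by simp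
        next
          case 3 then show ?thesis using xF xy pFl by simp
        qed
      qed
    qed
  qed
  have "matching_of E ?M" unfolding matching_of_def using sub pw by blast
  hence "card ?M \<le> nu E" using nu_ge finE by blast
  moreover have "card ?M = card Fl + 1"
  proof -
    have "card Fl > 0" using finFl e card_gt_0_iff by blast
    thus ?thesis using k1(1) k2(1) hh(3) finFl e by (simp add: card_Diff_singleton)
  qed
  ultimately show False using cFl by simp
qed

end
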